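(* Let $\eta\in\mathbb{R}$ with $\eta^2<2$, $h>0$, $x_0\in\mathbb{R}$, and let $(\Delta W_n)_{n\ge0}$ and $(\Delta\tilde W_n)_{n\ge0}$ be mutually independent sequences of i.i.d. $\mathcal{N}(0,h)$ random variables. For $f(x)=-x$, $g(x)=1+\eta x$ and $F(x)=f(x)-\tfrac12g'(x)g(x)$, define the three-stage Runge--Kutta iterates $$x_{n+1}=x_n+\tfrac14(F_1+3F_3)h+\tfrac14(G_1+3G_3)\Delta W_n+\tfrac{1}{2\sqrt3}\Big(f'(x_n)g(x_n)-g'(x_n)f(x_n)-\tfrac12g''(x_n)g(x_n)^2\Big)h\,\Delta\tilde W_n,$$ where $F_1=F(x_n)$, $G_1=g(x_n)$, $F_2=F(Y_2)$, $G_2=g(Y_2)$ with $Y_2=x_n+\tfrac13F_1h+\tfrac13G_1\Delta W_n$, and $F_3=F(Y_3)$, $G_3=g(Y_3)$ with $Y_3=x_n+\tfrac23F_2h+\tfrac23G_2\Delta W_n$, starting from the deterministic value $x_0$. Let $\mu^{(2)}_n=\mathbb{E}[x_n^2]$. Suppose $\big|1-h+\tfrac18h^2(4-\eta^4)-\tfrac1{48}h^3(2+\eta^2)^3\big|<1$ and $$\Big|1-h(2-\eta^2)+\tfrac14h^2(8-8\eta^2+\eta^4)-\tfrac1{24}h^3(32-36\eta^2+3\eta^6)+\tfrac1{192}h^4(2+\eta^2)^2(28-52\eta^2+27\eta^4)-\tfrac1{96}h^5(2+\eta^2)^4(1-2\eta^2)+\tfrac1{2304}h^6(2+\eta^2)^6\Big|<1.$$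 Then $\mu^{(2)}_n$ converges as $n\to\infty$ to a limit $\mu^{(2)}_\infty(h)$, and $\mu^{(2)}_\infty(h)=\frac{1}{2-\eta^2}+O(h)$ as $h\to0$.
   Context: Here $\Delta W_n,\Delta\tilde W_n$ are independent of $x_0,\dots,x_n$. *)

theory Defs
  imports "HOL-Probability.Probability" "HOL-Library.Landau_Symbols"
begin

definition rk_f :: "real \<Rightarrow> real" where
  "rk_f x = - x"

definition rk_g :: "real \<Rightarrow> real \<Rightarrow> real" where
  "rk_g \<eta> x = 1 + \<eta> * x"

definition rk_F :: "real \<Rightarrow> real \<Rightarrow> real" where
  "rk_F \<eta> x = rk_f x - 1/2 * deriv (rk_g \<eta>) x * rk_g \<eta> x"

definition rk_step :: "real \<Rightarrow> real \<Rightarrow> real \<Rightarrow> real \<Rightarrow> real \<Rightarrow> real" where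
  "rk_step \<eta> h x dW dWt =
     (let F1 = rk_F \<eta> x; G1 = rk_g \<eta> x;
          Y2 = x + 1/3 * F1 * h + 1/3 * G1 * dW;
          F2 = rk_F \<eta> Y2; G2 = rk_g \<eta> Y2;
          Y3 = x + 2/3 * F2 * h + 2/3 * G2 * dW;
          F3 = rk_F \<eta> Y3; G3 = rk_g \<eta> Y3
      in x + 1/4 * (F1 + 3 * F3) * h + 1/4 * (G1 + 3 * G3) * dW
           + 1 / (2 * sqrt 3) *
             (deriv rk_f x * rk_g \<eta> x - deriv (rk_g \<eta>) x * rk_f x
              - 1/2 * deriv (deriv (rk_g \<eta>)) x * (rk_g \<eta> x)^2) * h * dWt)"

primrec rk_iter :: "real \<Rightarrow> real \<Rightarrow> real \<Rightarrow> (nat \<Rightarrow> real) \<Rightarrow> (nat \<Rightarrow> real) \<Rightarrow> nat \<Rightarrow> real" where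
  "rk_iter \<eta> h x0 dW dWt 0 = x0"
| "rk_iter \<eta> h x0 dW dWt (Suc n) = rk_step \<eta> h (rk_iter \<eta> h x0 dW dWt n) (dW n) (dWt n)"

end

theory Submission
  imports Defs
begin
definition ra0 :: "real \<Rightarrow> real \<Rightarrow> real" where
  "ra0 \<eta> h = (1 - h - 1/2 * h * \<eta>^2 + 1/2 * h^2 + 1/2 * h^2 * \<eta>^2 + 1/8 * h^2 * \<eta>^4 - 1/6 * h^3 - 1/4 * h^3 * \<eta>^2 - 1/8 * h^3 * \<eta>^4 - 1/48 * h^3 * \<eta>^6)"

definition ra1 :: "real \<Rightarrow> real \<Rightarrow> real" where
  "ra1 \<eta> h = (\<eta> - h * \<eta> - 1/2 * h * \<eta>^3 + 1/2 * h^2 * \<eta> + 1/2 * h^2 * \<eta>^3 + 1/8 * h^2 * \<eta>^5)"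

definition ra2 :: "real \<Rightarrow> real \<Rightarrow> real" where
  "ra2 \<eta> h = (1/2 * \<eta>^2 - 1/2 * h * \<eta>^2 - 1/4 * h * \<eta>^4)"

definition ra3 :: "real \<Rightarrow> real \<Rightarrow> real" where
  "ra3 \<eta> h = (1/6 * \<eta>^3)"

definition rb0 :: "real \<Rightarrow> real \<Rightarrow> real" where
  "rb0 \<eta> h = (- 1/2 * h * \<eta> + 1/4 * h^2 * \<eta> + 1/8 * h^2 * \<eta>^3 - 1/12 * h^3 * \<eta> - 1/12 * h^3 * \<eta>^3 - 1/48 * h^3 * \<eta>^5)"

definition rb1 :: "real \<Rightarrow> real \<Rightarrow> real" where
  "rb1 \<eta> h = (1 - 1/2 * h - 1/2 * h * \<eta>^2 + 1/6 * h^2 + 1/3 * h^2 * \<eta>^2 + 1/8 * h^2 * \<eta>^4)"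

definition rb2 :: "real \<Rightarrow> real \<Rightarrow> real" where
  "rb2 \<eta> h = (1/2 * \<eta> - 1/3 * h * \<eta> - 1/4 * h * \<eta>^3)"

definition rb3 :: "real \<Rightarrow> real \<Rightarrow> real" where
  "rb3 \<eta> h = (1/6 * \<eta>^2)"

definition ral :: "real \<Rightarrow> real \<Rightarrow> real" where
  "ral \<eta> h = (1 + 1/2 * \<eta>^2 - 1/2 * h - 1/2 * h * \<eta>^2 - 1/8 * h * \<eta>^4 + 1/6 * h^2 + 1/4 * h^2 * \<eta>^2 + 1/8 * h^2 * \<eta>^4 + 1/48 * h^2 * \<eta>^6)"

definition rbe :: "real \<Rightarrow> real \<Rightarrow> real" where
  "rbe \<eta> h = (- 1/2 * \<eta> + 1/4 * h * \<eta> + 1/8 * h * \<eta>^3 - 1/12 * h^2 * \<eta> - 1/12 * h^2 * \<eta>^3 - 1/48 * h^2 * \<eta>^5)"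

definition EPQ :: "real \<Rightarrow> real \<Rightarrow> real \<Rightarrow> real \<Rightarrow> real \<Rightarrow> real \<Rightarrow> real \<Rightarrow> real \<Rightarrow> real \<Rightarrow> real" where
  "EPQ h p0 p1 p2 p3 q0 q1 q2 q3 = p0*q0 + (p0*q2+p1*q1+p2*q0)*h + 3*(p1*q3+p2*q2+p3*q1)*h^2 + 15*p3*q3*h^3"

definition "rA1 \<eta> h = ra0 \<eta> h + ra2 \<eta> h * h"
definition "rB1 \<eta> h = rb0 \<eta> h + rb2 \<eta> h * h"
definition "rA2 \<eta> h = EPQ h (ra0 \<eta> h) (ra1 \<eta> h) (ra2 \<eta> h) (ra3 \<eta> h) (ra0 \<eta> h) (ra1 \<eta> h) (ra2 \<eta> h) (ra3 \<eta> h)"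
definition "rC \<eta> h = 2 * EPQ h (ra0 \<eta> h) (ra1 \<eta> h) (ra2 \<eta> h) (ra3 \<eta> h) (rb0 \<eta> h) (rb1 \<eta> h) (rb2 \<eta> h) (rb3 \<eta> h)"
definition "rD \<eta> h = EPQ h (rb0 \<eta> h) (rb1 \<eta> h) (rb2 \<eta> h) (rb3 \<eta> h) (rb0 \<eta> h) (rb1 \<eta> h) (rb2 \<eta> h) (rb3 \<eta> h) + h^3/12"
definition "rP1 \<eta> h = ral \<eta> h - ra2 \<eta> h"
definition "rQ2 \<eta> h = 2 * (ra0 \<eta> h * rbe \<eta> h + (ra0 \<eta> h * rb2 \<eta> h + ra1 \<eta> h * rb1 \<eta> h + ra2 \<eta> h * rb0 \<eta> h)
   + 3 * (ra1 \<eta> h * rb3 \<eta> h + ra2 \<eta> h * rb2 \<eta> h + ra3 \<eta> h * rb1 \<eta> h) * h + 15 * ra3 \<eta> h * rb3 \<eta> h * h^2)"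
definition "rQ3 \<eta> h = h * (rbe \<eta> h)^2 + (2 * rb0 \<eta> h * rb2 \<eta> h + (rb1 \<eta> h)^2)
   + 3 * (2 * rb1 \<eta> h * rb3 \<eta> h + (rb2 \<eta> h)^2) * h + 15 * (rb3 \<eta> h)^2 * h^2 + h^2/12"
definition "rP2 \<eta> h = 2 * ral \<eta> h - h * (ral \<eta> h)^2 - ((ra1 \<eta> h)^2 + 2 * ra0 \<eta> h * ra2 \<eta> h)
   - 3 * ((ra2 \<eta> h)^2 + 2 * ra1 \<eta> h * ra3 \<eta> h) * h - 15 * (ra3 \<eta> h)^2 * h^2"
definition "rR \<eta> h = (rQ2 \<eta> h * (rbe \<eta> h + rb2 \<eta> h) / rP1 \<eta> h + rQ3 \<eta> h) / rP2 \<eta> h"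

lemma a0_id: "ra0 \<eta> h = 1 - h * ral \<eta> h"
  unfolding ra0_def ral_def by (simp add: algebra_simps power2_eq_square power3_eq_cube)
lemma b0_id: "rb0 \<eta> h = h * rbe \<eta> h"
  unfolding rb0_def rbe_def by (simp add: algebra_simps power2_eq_square power3_eq_cube)

lemma P1_eq: "1 - rA1 \<eta> h = h * rP1 \<eta> h"
  unfolding rA1_def rP1_def a0_id by (simp add: algebra_simps)
lemma P2_eq: "1 - rA2 \<eta> h = h * rP2 \<eta> h"
  unfolding rA2_def rP2_def EPQ_def a0_id by (simp add: algebra_simps power2_eq_square power3_eq_cube)
lemma Q2_eq: "rC \<eta> h = h * rQ2 \<eta> h"
  unfolding rC_def rQ2_def EPQ_def b0_id by (simp add: algebra_simps power2_eq_square power3_eq_cube)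
lemma Q3_eq: "rD \<eta> h = h * rQ3 \<eta> h"
  unfolding rD_def rQ3_def EPQ_def b0_id by (simp add: algebra_simps power2_eq_square power3_eq_cube)

lemma P1_0: "rP1 \<eta> 0 = 1" unfolding rP1_def ral_def ra2_def by simp
lemma P2_0: "rP2 \<eta> 0 = 2 - \<eta>^2" unfolding rP2_def ral_def ra0_def ra1_def ra2_def by (simp add: algebra_simps)
lemma Q3_0: "rQ3 \<eta> 0 = 1" unfolding rQ3_def rb0_def rb1_def by simp
lemma B1_0: "rbe \<eta> 0 + rb2 \<eta> 0 = 0" unfolding rbe_def rb2_def by simp
lemma B1_eq: "rB1 \<eta> h = h * (rbe \<eta> h + rb2 \<eta> h)" unfolding rB1_def b0_id by (simp add: algebra_simps)

lemma A1_eq: "rA1 \<eta> h = 1 - h + 1/8 * h^2 * (4 - \<eta>^4) - 1/48 * h^3 * (2 + \<eta>^2)^3"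
  unfolding rA1_def ra0_def ra2_def by algebra
lemma A2_eq: "rA2 \<eta> h = 1 - h * (2 - \<eta>^2) + 1/4 * h^2 * (8 - 8 * \<eta>^2 + \<eta>^4)
          - 1/24 * h^3 * (32 - 36 * \<eta>^2 + 3 * \<eta>^6)
          + 1/192 * h^4 * (2 + \<eta>^2)^2 * (28 - 52 * \<eta>^2 + 27 * \<eta>^4)
          - 1/96 * h^5 * (2 + \<eta>^2)^4 * (1 - 2 * \<eta>^2)
          + 1/2304 * h^6 * (2 + \<eta>^2)^6"
  unfolding rA2_def EPQ_def ra0_def ra1_def ra2_def ra3_def by algebra
lemma deriv_g: "deriv (rk_g \<eta>) = (\<lambda>_. \<eta>)"
proof
  fix x show "deriv (rk_g \<eta>) x = \<eta>"
    unfolding rk_g_def by (rule DERIV_imp_deriv) (auto intro!: derivative_eq_intros)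
qed

lemma deriv_f: "deriv rk_f = (\<lambda>_. -1)"
proof
  fix x show "deriv rk_f x = -1"
    unfolding rk_f_def by (rule DERIV_imp_deriv) (auto intro!: derivative_eq_intros)
qed

lemma deriv_const0: "deriv (\<lambda>_. c) = (\<lambda>_. (0::real))"
  by (rule ext, rule DERIV_imp_deriv) (auto intro!: derivative_eq_intros)

lemma rk_step_eq:
  "rk_step \<eta> h x u w =
     (ra0 \<eta> h + ra1 \<eta> h * u + ra2 \<eta> h * u^2 + ra3 \<eta> h * u^3) * x
   + (rb0 \<eta> h + rb1 \<eta> h * u + rb2 \<eta> h * u^2 + rb3 \<eta> h * u^3) - h / (2 * sqrt 3) * w"
proof -
  define F where "F y = - (1 + \<eta>^2/2) * y - \<eta>/2" for y
  have F: "rk_F \<eta> y = F y" for y unfolding rk_F_def deriv_g rk_f_def rk_g_def F_def by (simp add: algebra_simps power2_eq_square)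
  define Y2 where "Y2 = x + 1/3 * F x * h + 1/3 * (1 + \<eta> * x) * u"
  define Y3 where "Y3 = x + 2/3 * F Y2 * h + 2/3 * (1 + \<eta> * Y2) * u"
  have "rk_step \<eta> h x u w = x + 1/4 * (F x + 3 * F Y3) * h + 1/4 * ((1 + \<eta> * x) + 3 * (1 + \<eta> * Y3)) * u
           - h / (2 * sqrt 3) * w"
    unfolding rk_step_def Let_def F deriv_g deriv_f deriv_const0 Y2_def[symmetric] Y3_def[symmetric]
    unfolding rk_f_def rk_g_def by (simp add: algebra_simps Y2_def Y3_def)
  also have "\<dots> = (ra0 \<eta> h + ra1 \<eta> h * u + ra2 \<eta> h * u^2 + ra3 \<eta> h * u^3) * x
   + (rb0 \<eta> h + rb1 \<eta> h * u + rb2 \<eta> h * u^2 + rb3 \<eta> h * u^3) - h / (2 * sqrt 3) * w"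
    unfolding Y3_def Y2_def F_def ra0_def ra1_def ra2_def ra3_def rb0_def rb1_def rb2_def rb3_def
    by algebra
  finally show ?thesis .
qed

lemma lin_rec_tendsto0:
  fixes e f :: "nat \<Rightarrow> real"
  assumes A: "\<bar>A\<bar> < 1" and f: "f \<longlonglongrightarrow> 0" and rec: "\<And>n. e (Suc n) = A * e n + f n"
  shows "e \<longlonglongrightarrow> 0"
proof (rule LIMSEQ_I)
  fix r :: real assume r: "0 < r"
  define q where "q = \<bar>A\<bar>"
  have q0: "0 \<le> q" "q < 1" using A by (auto simp: q_def)
  have "r * (1 - q) / 2 > 0" using r q0 by auto
  with f obtain N where N: "\<And>n. n \<ge> N \<Longrightarrow> norm (f n - 0) < r * (1 - q) / 2"
    using LIMSEQ_D by blast
  have bound: "\<bar>e (N + k)\<bar> \<le> q ^ k * \<bar>e N\<bar> + r / 2" for k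
  proof (induction k)
    case 0 then show ?case using r by simp
  next
    case (Suc k)
    have "\<bar>e (N + Suc k)\<bar> = \<bar>A * e (N + k) + f (N + k)\<bar>" by (simp add: rec)
    also have "\<dots> \<le> q * \<bar>e (N + k)\<bar> + \<bar>f (N + k)\<bar>"
      using abs_triangle_ineq[of "A * e (N + k)" "f (N + k)"] by (simp add: q_def abs_mult)
    also have "\<dots> \<le> q * (q ^ k * \<bar>e N\<bar> + r / 2) + r * (1 - q) / 2"
      using N[of "N + k"] Suc q0 by (intro add_mono mult_left_mono) auto
    also have "\<dots> = q ^ Suc k * \<bar>e N\<bar> + r / 2" by (simp add: field_simps)
    finally show ?case .
  qed
  have "(\<lambda>k. q ^ k * \<bar>e N\<bar>) \<longlonglongrightarrow> 0 * \<bar>e N\<bar>"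
    by (intro tendsto_mult LIMSEQ_power_zero) (use q0 in auto)
  then obtain K where K: "\<And>k. k \<ge> K \<Longrightarrow> norm (q ^ k * \<bar>e N\<bar> - 0) < r / 2"
    using LIMSEQ_D[of _ 0 "r/2"] r by fastforce
  show "\<exists>no. \<forall>n\<ge>no. norm (e n - 0) < r"
  proof (intro exI allI impI)
    fix n assume "N + K \<le> n"
    then obtain k where k: "n = N + k" "k \<ge> K" by (metis add_le_imp_le_left le_add_diff_inverse le_add1 order_trans)
    have "\<bar>e n\<bar> \<le> q ^ k * \<bar>e N\<bar> + r / 2" using bound k by simp
    moreover have "q ^ k * \<bar>e N\<bar> < r / 2" using K[OF k(2)] q0 by simp
    ultimately show "norm (e n - 0) < r" by simp
  qed
qed

lemma lin_rec_tendsto: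
  fixes s f :: "nat \<Rightarrow> real"
  assumes A: "\<bar>A\<bar> < 1" and f: "f \<longlonglongrightarrow> L" and rec: "\<And>n. s (Suc n) = A * s n + f n"
  shows "s \<longlonglongrightarrow> L / (1 - A)"
proof -
  have A1: "1 - A \<noteq> 0" using A by auto
  have "(\<lambda>n. s n - L / (1 - A)) \<longlonglongrightarrow> 0"
  proof (rule lin_rec_tendsto0[OF A])
    show "(\<lambda>n. f n - L) \<longlonglongrightarrow> 0" using f by (simp add: LIM_zero)
    fix n show "s (Suc n) - L / (1 - A) = A * (s n - L / (1 - A)) + (f n - L)"
      using A1 by (simp add: rec field_simps)
  qed
  then show ?thesis by (simp add: LIM_zero_iff)
qed

lemma R_bigo:
  assumes "\<eta>^2 < 2"
  shows "(\<lambda>h. rR \<eta> h - 1 / (2 - \<eta>^2)) \<in> O[at_right 0](\<lambda>h. h)"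
proof -
  have d1: "rP1 \<eta> field_differentiable at 0"
    unfolding rP1_def[abs_def] ral_def ra2_def by (auto intro!: derivative_intros)
  have d2: "rP2 \<eta> field_differentiable at 0"
    unfolding rP2_def[abs_def] ral_def ra0_def ra1_def ra2_def ra3_def by (auto intro!: derivative_intros)
  have d3: "rQ2 \<eta> field_differentiable at 0"
    unfolding rQ2_def[abs_def] rbe_def ra0_def ra1_def ra2_def ra3_def rb0_def rb1_def rb2_def rb3_def
    by (auto intro!: derivative_intros)
  have d4: "rQ3 \<eta> field_differentiable at 0"
    unfolding rQ3_def[abs_def] rbe_def rb0_def rb1_def rb2_def rb3_def
    by (auto intro!: derivative_intros)
  have d5: "(\<lambda>h. rbe \<eta> h + rb2 \<eta> h) field_differentiable at 0"
    unfolding rbe_def rb2_def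
    by (auto intro!: derivative_intros)
  have "(\<lambda>h. (rQ2 \<eta> h * (rbe \<eta> h + rb2 \<eta> h) / rP1 \<eta> h + rQ3 \<eta> h) / rP2 \<eta> h) field_differentiable at 0"
    using assms
    by (intro field_differentiable_divide field_differentiable_add field_differentiable_mult d1 d2 d3 d4 d5)
       (auto simp: P1_0 P2_0)
  then have "rR \<eta> field_differentiable at 0" unfolding rR_def[abs_def] .
  then obtain D where D: "(rR \<eta> has_field_derivative D) (at 0)"
    unfolding field_differentiable_def by blast
  have R0: "rR \<eta> 0 = 1 / (2 - \<eta>^2)" by (simp add: rR_def P1_0 P2_0 Q3_0 B1_0)
  have "((\<lambda>y. (rR \<eta> y - rR \<eta> 0) / (y - 0)) \<longlongrightarrow> D) (at 0)"
    using D unfolding has_field_derivative_iff .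
  then have "((\<lambda>y. (rR \<eta> y - rR \<eta> 0) / (y - 0)) \<longlongrightarrow> D) (at_right 0)"
    by (rule tendsto_mono[rotated]) (simp add: at_le)
  then have "((\<lambda>h. (rR \<eta> h - 1 / (2 - \<eta>^2)) / h) \<longlongrightarrow> D) (at_right 0)"
    by (simp add: R0)
  then show ?thesis
    by (rule bigoI_tendsto) (use eventually_at_right_less[of "0::real"] in \<open>auto elim: eventually_mono\<close>)
qed

context prob_space begin

lemma nmom:
  assumes D: "distributed M lborel X (normal_density 0 \<sigma>)" and s: "0 < \<sigma>"
  shows "integrable M (\<lambda>\<omega>. X \<omega> ^ k)"
    and "expectation (\<lambda>\<omega>. X \<omega> ^ k) = (\<integral>x. normal_density 0 \<sigma> x * x ^ k \<partial>lborel)"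
proof -
  have "integrable lborel (\<lambda>x. normal_density 0 \<sigma> x * x ^ k)"
    using integrable_normal_moment[where \<mu>=0 and \<sigma>=\<sigma> and k=k] s by simp
  then show "integrable M (\<lambda>\<omega>. X \<omega> ^ k)"
    using distributed_integrable[OF D, of "\<lambda>x. x ^ k"] by simp
  show "expectation (\<lambda>\<omega>. X \<omega> ^ k) = (\<integral>x. normal_density 0 \<sigma> x * x ^ k \<partial>lborel)"
    using distributed_integral[OF D, of "\<lambda>x. x ^ k"] by simp
qed

lemma nmom_hb:
  assumes D: "distributed M lborel X (normal_density 0 (sqrt h))" and h: "0 < h"
  shows "has_bochner_integral M (\<lambda>\<omega>. X \<omega> ^ 0) 1"
    "has_bochner_integral M (\<lambda>\<omega>. X \<omega> ^ 1) 0"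
    "has_bochner_integral M (\<lambda>\<omega>. X \<omega> ^ 2) h"
    "has_bochner_integral M (\<lambda>\<omega>. X \<omega> ^ 3) 0"
    "has_bochner_integral M (\<lambda>\<omega>. X \<omega> ^ 4) (3 * h^2)"
    "has_bochner_integral M (\<lambda>\<omega>. X \<omega> ^ 5) 0"
    "has_bochner_integral M (\<lambda>\<omega>. X \<omega> ^ 6) (15 * h^3)"
proof -
  have s: "0 < sqrt h" using h by simp
  note I = nmom[OF D s]
  have ev: "(\<integral>x. normal_density 0 (sqrt h) x * x ^ (2*k) \<partial>lborel) = fact (2 * k) / ((2 / (sqrt h)\<^sup>2)^k * fact k)" for k
    using integral_normal_moment_even[where \<mu>=0 and \<sigma>="sqrt h" and k=k] s by simp
  have od: "(\<integral>x. normal_density 0 (sqrt h) x * x ^ (2*k+1) \<partial>lborel) = 0" for k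
    using integral_normal_moment_odd[where \<mu>=0 and \<sigma>="sqrt h" and k=k] s by simp
  have hb: "has_bochner_integral M (\<lambda>\<omega>. X \<omega> ^ k) v" if "(\<integral>x. normal_density 0 (sqrt h) x * x ^ k \<partial>lborel) = v" for k v
    using I[of k] that by (simp add: has_bochner_integral_iff)
  show "has_bochner_integral M (\<lambda>\<omega>. X \<omega> ^ 0) 1"
    using hb[of 0 1] ev[of 0] by simp
  show "has_bochner_integral M (\<lambda>\<omega>. X \<omega> ^ 1) 0"
    using hb[of 1 0] od[of 0] by simp
  show "has_bochner_integral M (\<lambda>\<omega>. X \<omega> ^ 3) 0"
    using hb[of 3 0] od[of 1] by (simp add: numeral_eq_Suc)
  show "has_bochner_integral M (\<lambda>\<omega>. X \<omega> ^ 5) 0"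
    using hb[of 5 0] od[of 2] by (simp add: numeral_eq_Suc)
  show "has_bochner_integral M (\<lambda>\<omega>. X \<omega> ^ 2) h"
    using hb[of 2 h] ev[of 1] h by simp
  show "has_bochner_integral M (\<lambda>\<omega>. X \<omega> ^ 4) (3 * h^2)"
    using hb[of 4 "3*h^2"] ev[of 2] h by (simp add: fact_numeral power2_eq_square)
  show "has_bochner_integral M (\<lambda>\<omega>. X \<omega> ^ 6) (15 * h^3)"
    using hb[of 6 "15*h^3"] ev[of 3] h by (simp add: fact_numeral power3_eq_cube)
qed

lemma cubic_hb:
  assumes D: "distributed M lborel X (normal_density 0 (sqrt h))" and h: "0 < h"
  shows "has_bochner_integral M
    (\<lambda>\<omega>. (p0 + p1 * X \<omega> + p2 * X \<omega>^2 + p3 * X \<omega>^3) * (q0 + q1 * X \<omega> + q2 * X \<omega>^2 + q3 * X \<omega>^3))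
    (EPQ h p0 p1 p2 p3 q0 q1 q2 q3)"
proof -
  note m = nmom_hb[OF D h]
  have eq: "(\<lambda>\<omega>. (p0 + p1 * X \<omega> + p2 * X \<omega>^2 + p3 * X \<omega>^3) * (q0 + q1 * X \<omega> + q2 * X \<omega>^2 + q3 * X \<omega>^3))
    = (\<lambda>\<omega>. (p0*q0) * X \<omega>^0 + (p0*q1+p1*q0) * X \<omega>^1 + (p0*q2+p1*q1+p2*q0) * X \<omega>^2
         + (p0*q3+p1*q2+p2*q1+p3*q0) * X \<omega>^3 + (p1*q3+p2*q2+p3*q1) * X \<omega>^4
         + (p2*q3+p3*q2) * X \<omega>^5 + (p3*q3) * X \<omega>^6)"
    by (rule ext) (simp add: algebra_simps power2_eq_square power3_eq_cube power4_eq_xxxx numeral_eq_Suc)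
  have "has_bochner_integral M (\<lambda>\<omega>. (p0*q0) * X \<omega>^0 + (p0*q1+p1*q0) * X \<omega>^1 + (p0*q2+p1*q1+p2*q0) * X \<omega>^2
         + (p0*q3+p1*q2+p2*q1+p3*q0) * X \<omega>^3 + (p1*q3+p2*q2+p3*q1) * X \<omega>^4
         + (p2*q3+p3*q2) * X \<omega>^5 + (p3*q3) * X \<omega>^6)
     ((p0*q0) * 1 + (p0*q1+p1*q0) * 0 + (p0*q2+p1*q1+p2*q0) * h
         + (p0*q3+p1*q2+p2*q1+p3*q0) * 0 + (p1*q3+p2*q2+p3*q1) * (3*h^2)
         + (p2*q3+p3*q2) * 0 + (p3*q3) * (15*h^3))"
    by (intro has_bochner_integral_add has_bochner_integral_mult_right m)
  also have "((p0*q0) * 1 + (p0*q1+p1*q0) * 0 + (p0*q2+p1*q1+p2*q0) * h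
         + (p0*q3+p1*q2+p2*q1+p3*q0) * 0 + (p1*q3+p2*q2+p3*q1) * (3*h^2)
         + (p2*q3+p3*q2) * 0 + (p3*q3) * (15*h^3)) = EPQ h p0 p1 p2 p3 q0 q1 q2 q3"
    by (simp add: EPQ_def algebra_simps)
  finally show ?thesis unfolding eq .
qed

end

lemma rk_iter_cong:
  "(\<And>k. k < n \<Longrightarrow> d1 k = d2 k) \<Longrightarrow> (\<And>k. k < n \<Longrightarrow> e1 k = e2 k) \<Longrightarrow>
   rk_iter \<eta> h x0 d1 e1 n = rk_iter \<eta> h x0 d2 e2 n"
  by (induction n) auto

lemma rk_iter_meas:
  assumes "\<And>k. k < n \<Longrightarrow> Inl k \<in> A \<and> Inr k \<in> A"
  shows "(\<lambda>z. rk_iter \<eta> h x0 (\<lambda>k. z (Inl k)) (\<lambda>k. z (Inr k)) n) \<in> borel_measurable (PiM A (\<lambda>_. borel))"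
  using assms
proof (induction n)
  case 0 then show ?case by simp
next
  case (Suc n)
  then have IH[measurable]: "(\<lambda>z. rk_iter \<eta> h x0 (\<lambda>k. z (Inl k)) (\<lambda>k. z (Inr k)) n) \<in> borel_measurable (PiM A (\<lambda>_. borel))"
    by simp
  have [measurable]: "(\<lambda>z. z (Inl n)) \<in> borel_measurable (PiM A (\<lambda>_. borel))"
       "(\<lambda>z. z (Inr n)) \<in> borel_measurable (PiM A (\<lambda>_. borel))"
    using Suc.prems[of n] by (auto intro!: measurable_component_singleton)
  show ?case by (simp add: rk_step_eq) measurable
qed

context prob_space begin

lemma indep_uw:
  assumes ind: "indep_vars (\<lambda>_. borel) (\<lambda>k. case k of Inl n \<Rightarrow> dW n | Inr n \<Rightarrow> dWt n) UNIV"
    and f: "f \<in> borel_measurable borel" and g: "g \<in> borel_measurable borel"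
  shows "indep_var borel (\<lambda>\<omega>. f (dW n \<omega>)) borel (\<lambda>\<omega>. g (dWt n \<omega>))"
proof -
  let ?X = "\<lambda>k. case k of Inl n \<Rightarrow> dW n | Inr n \<Rightarrow> dWt n"
  have "indep_var (PiM {Inl n} (\<lambda>_. borel)) (\<lambda>\<omega>. restrict (\<lambda>i. ?X i \<omega>) {Inl n})
                  (PiM {Inr n} (\<lambda>_. borel)) (\<lambda>\<omega>. restrict (\<lambda>i. ?X i \<omega>) {Inr n})"
    by (rule indep_var_restrict[OF ind]) auto
  then have "indep_var borel ((\<lambda>z. f (z (Inl n))) \<circ> (\<lambda>\<omega>. restrict (\<lambda>i. ?X i \<omega>) {Inl n}))
                  borel ((\<lambda>z. g (z (Inr n))) \<circ> (\<lambda>\<omega>. restrict (\<lambda>i. ?X i \<omega>) {Inr n}))"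
  proof (rule indep_var_compose)
    show "(\<lambda>z. f (z (Inl n))) \<in> borel_measurable (PiM {Inl n} (\<lambda>_. borel))"
      using measurable_compose[OF measurable_component_singleton[of "Inl n" "{Inl n}" "\<lambda>_. borel"] f] by simp
    show "(\<lambda>z. g (z (Inr n))) \<in> borel_measurable (PiM {Inr n} (\<lambda>_. borel))"
      using measurable_compose[OF measurable_component_singleton[of "Inr n" "{Inr n}" "\<lambda>_. borel"] g] by simp
  qed
  then show ?thesis by (simp add: comp_def)
qed

lemma indep_xn:
  assumes ind: "indep_vars (\<lambda>_. borel) (\<lambda>k. case k of Inl n \<Rightarrow> dW n | Inr n \<Rightarrow> dWt n) UNIV"
    and f: "f \<in> borel_measurable borel" and g: "(\<lambda>(a, b). g a b) \<in> borel_measurable (borel \<Otimes>\<^sub>M borel)"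
  shows "indep_var borel (\<lambda>\<omega>. f (rk_iter \<eta> h x0 (\<lambda>k. dW k \<omega>) (\<lambda>k. dWt k \<omega>) n))
                   borel (\<lambda>\<omega>. g (dW n \<omega>) (dWt n \<omega>))"
proof -
  let ?X = "\<lambda>k. case k of Inl n \<Rightarrow> dW n | Inr n \<Rightarrow> dWt n"
  let ?A = "Inl ` {..<n} \<union> Inr ` {..<n}"
  let ?B = "{Inl n, Inr n}"
  have "indep_var (PiM ?A (\<lambda>_. borel)) (\<lambda>\<omega>. restrict (\<lambda>i. ?X i \<omega>) ?A)
                  (PiM ?B (\<lambda>_. borel)) (\<lambda>\<omega>. restrict (\<lambda>i. ?X i \<omega>) ?B)"
    by (rule indep_var_restrict[OF ind]) auto
  then have "indep_var borel ((\<lambda>z. f (rk_iter \<eta> h x0 (\<lambda>k. z (Inl k)) (\<lambda>k. z (Inr k)) n)) \<circ> (\<lambda>\<omega>. restrict (\<lambda>i. ?X i \<omega>) ?A))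
                  borel ((\<lambda>z. (\<lambda>(a, b). g a b) (z (Inl n), z (Inr n))) \<circ> (\<lambda>\<omega>. restrict (\<lambda>i. ?X i \<omega>) ?B))"
  proof (rule indep_var_compose)
    show "(\<lambda>z. f (rk_iter \<eta> h x0 (\<lambda>k. z (Inl k)) (\<lambda>k. z (Inr k)) n)) \<in> borel_measurable (PiM ?A (\<lambda>_. borel))"
      by (rule measurable_compose[OF rk_iter_meas f]) auto
    show "(\<lambda>z. (\<lambda>(a, b). g a b) (z (Inl n), z (Inr n))) \<in> borel_measurable (PiM ?B (\<lambda>_. borel))"
      by (rule measurable_compose[OF measurable_Pair g])
         (auto intro!: measurable_component_singleton)
  qed
  moreover have "rk_iter \<eta> h x0 (\<lambda>k. restrict (\<lambda>i. ?X i \<omega>) ?A (Inl k)) (\<lambda>k. restrict (\<lambda>i. ?X i \<omega>) ?A (Inr k)) n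
     = rk_iter \<eta> h x0 (\<lambda>k. dW k \<omega>) (\<lambda>k. dWt k \<omega>) n" for \<omega>
    by (rule rk_iter_cong) auto
  ultimately show ?thesis by (simp add: comp_def)
qed

end

lemma hb_conv:
  "has_bochner_integral M f x \<Longrightarrow> (\<And>\<omega>. f \<omega> = g \<omega>) \<Longrightarrow> x = y \<Longrightarrow> has_bochner_integral M g y"
proof -
  assume "has_bochner_integral M f x" "\<And>\<omega>. f \<omega> = g \<omega>" "x = y"
  moreover have "f = g" using \<open>\<And>\<omega>. f \<omega> = g \<omega>\<close> by (rule ext)
  ultimately show ?thesis by simp
qed

context prob_space begin

lemma uw_facts:
  fixes \<eta> h :: real
  assumes h: "0 < h"
    and DU: "distributed M lborel (dW n) (normal_density 0 (sqrt h))"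
    and DW: "distributed M lborel (dWt n) (normal_density 0 (sqrt h))"
    and indB: "indep_vars (\<lambda>_. borel) (\<lambda>k. case k of Inl n \<Rightarrow> dW n | Inr n \<Rightarrow> dWt n) UNIV"
  defines "pa \<equiv> \<lambda>u. ra0 \<eta> h + ra1 \<eta> h * u + ra2 \<eta> h * u^2 + ra3 \<eta> h * u^3"
      and "pb \<equiv> \<lambda>u. rb0 \<eta> h + rb1 \<eta> h * u + rb2 \<eta> h * u^2 + rb3 \<eta> h * u^3"
      and "c \<equiv> h / (2 * sqrt 3)"
  shows "has_bochner_integral M (\<lambda>\<omega>. pa (dW n \<omega>)) (rA1 \<eta> h)"
    "has_bochner_integral M (\<lambda>\<omega>. pb (dW n \<omega>) - c * dWt n \<omega>) (rB1 \<eta> h)"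
    "has_bochner_integral M (\<lambda>\<omega>. (pa (dW n \<omega>))^2) (rA2 \<eta> h)"
    "has_bochner_integral M (\<lambda>\<omega>. 2 * pa (dW n \<omega>) * (pb (dW n \<omega>) - c * dWt n \<omega>)) (rC \<eta> h)"
    "has_bochner_integral M (\<lambda>\<omega>. (pb (dW n \<omega>) - c * dWt n \<omega>)^2) (rD \<eta> h)"
proof -
  have ind: "indep_var borel (\<lambda>\<omega>. f (dW n \<omega>)) borel (\<lambda>\<omega>. g (dWt n \<omega>))"
    if "f \<in> borel_measurable borel" "g \<in> borel_measurable borel" for f g :: "real \<Rightarrow> real"
    by (rule indep_uw[OF indB that])
  note cub = cubic_hb[OF DU h]
  note wm = nmom_hb[OF DW h]
  have hW: "has_bochner_integral M (dWt n) 0" using wm(2) by simp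
  have hW2: "has_bochner_integral M (\<lambda>\<omega>. dWt n \<omega> * dWt n \<omega>) h" using wm(3) by (simp add: power2_eq_square)
  have hpa: "has_bochner_integral M (\<lambda>\<omega>. pa (dW n \<omega>)) (rA1 \<eta> h)"
    using cub[of "ra0 \<eta> h" "ra1 \<eta> h" "ra2 \<eta> h" "ra3 \<eta> h" 1 0 0 0]
    by (simp add: pa_def EPQ_def rA1_def algebra_simps)
  have hpb: "has_bochner_integral M (\<lambda>\<omega>. pb (dW n \<omega>)) (rB1 \<eta> h)"
    using cub[of "rb0 \<eta> h" "rb1 \<eta> h" "rb2 \<eta> h" "rb3 \<eta> h" 1 0 0 0]
    by (simp add: pb_def EPQ_def rB1_def algebra_simps)
  have hpaa: "has_bochner_integral M (\<lambda>\<omega>. pa (dW n \<omega>) * pa (dW n \<omega>)) (rA2 \<eta> h)"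
    using cub[of "ra0 \<eta> h" "ra1 \<eta> h" "ra2 \<eta> h" "ra3 \<eta> h" "ra0 \<eta> h" "ra1 \<eta> h" "ra2 \<eta> h" "ra3 \<eta> h"]
    by (simp add: pa_def rA2_def)
  have hpab: "has_bochner_integral M (\<lambda>\<omega>. pa (dW n \<omega>) * pb (dW n \<omega>)) (rC \<eta> h / 2)"
    using cub[of "ra0 \<eta> h" "ra1 \<eta> h" "ra2 \<eta> h" "ra3 \<eta> h" "rb0 \<eta> h" "rb1 \<eta> h" "rb2 \<eta> h" "rb3 \<eta> h"]
    by (simp add: pa_def pb_def rC_def)
  have hpbb: "has_bochner_integral M (\<lambda>\<omega>. pb (dW n \<omega>) * pb (dW n \<omega>)) (rD \<eta> h - h^3/12)"
    using cub[of "rb0 \<eta> h" "rb1 \<eta> h" "rb2 \<eta> h" "rb3 \<eta> h" "rb0 \<eta> h" "rb1 \<eta> h" "rb2 \<eta> h" "rb3 \<eta> h"]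
    by (simp add: pb_def rD_def)
  have mpa: "pa \<in> borel_measurable borel" unfolding pa_def by measurable
  have mpb: "pb \<in> borel_measurable borel" unfolding pb_def by measurable
  have prodW: "has_bochner_integral M (\<lambda>\<omega>. p (dW n \<omega>) * dWt n \<omega>) 0"
    if hp: "has_bochner_integral M (\<lambda>\<omega>. p (dW n \<omega>)) v" and mp: "p \<in> borel_measurable borel" for p v
  proof -
    have iv: "indep_var borel (\<lambda>\<omega>. p (dW n \<omega>)) borel (\<lambda>\<omega>. (\<lambda>t. t) (dWt n \<omega>))"
      by (rule ind[OF mp]) simp
    have i1: "integrable M (\<lambda>\<omega>. p (dW n \<omega>))" using hp by (simp add: has_bochner_integral_iff)
    have i2: "integrable M (\<lambda>\<omega>. dWt n \<omega>)" using hW by (simp add: has_bochner_integral_iff)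
    have e2: "expectation (\<lambda>\<omega>. dWt n \<omega>) = 0" using hW by (simp add: has_bochner_integral_iff)
    show ?thesis
      using indep_var_lebesgue_integral[OF iv[simplified] i1 i2] indep_var_integrable[OF iv[simplified] i1 i2] e2
      by (simp add: has_bochner_integral_iff)
  qed
  have hpaW: "has_bochner_integral M (\<lambda>\<omega>. pa (dW n \<omega>) * dWt n \<omega>) 0" by (rule prodW[OF hpa mpa])
  have hpbW: "has_bochner_integral M (\<lambda>\<omega>. pb (dW n \<omega>) * dWt n \<omega>) 0" by (rule prodW[OF hpb mpb])
  have c2: "c * c * h = h^3 / 12"
    unfolding c_def by (simp add: power2_eq_square[symmetric] power_divide field_simps) (simp add: power2_eq_square power3_eq_cube)
  show "has_bochner_integral M (\<lambda>\<omega>. pa (dW n \<omega>)) (rA1 \<eta> h)" by (fact hpa)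
  show "has_bochner_integral M (\<lambda>\<omega>. pb (dW n \<omega>) - c * dWt n \<omega>) (rB1 \<eta> h)"
    using has_bochner_integral_diff[OF hpb has_bochner_integral_mult_right[OF hW, of c]] by simp
  show "has_bochner_integral M (\<lambda>\<omega>. (pa (dW n \<omega>))^2) (rA2 \<eta> h)"
    using hpaa by (simp add: power2_eq_square)
  show "has_bochner_integral M (\<lambda>\<omega>. 2 * pa (dW n \<omega>) * (pb (dW n \<omega>) - c * dWt n \<omega>)) (rC \<eta> h)"
    by (rule hb_conv[OF has_bochner_integral_diff[OF has_bochner_integral_mult_right[OF hpab, of 2]
          has_bochner_integral_mult_right[OF hpaW, of "2 * c"]]]) (simp_all add: algebra_simps)
  have v: "rD \<eta> h - h^3/12 - 2 * c * 0 + c * c * h = rD \<eta> h" using c2 by simp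
  show "has_bochner_integral M (\<lambda>\<omega>. (pb (dW n \<omega>) - c * dWt n \<omega>)^2) (rD \<eta> h)"
    by (rule hb_conv[OF has_bochner_integral_add[OF has_bochner_integral_diff[OF hpbb
          has_bochner_integral_mult_right[OF hpbW, of "2 * c"]] has_bochner_integral_mult_right[OF hW2, of "c * c"]]])
       (simp add: algebra_simps power2_eq_square, rule v)
qed

end

context prob_space begin

lemma hb_indep_mult:
  fixes X Y :: "'a \<Rightarrow> real"
  assumes "indep_var borel X borel Y" "has_bochner_integral M X a" "has_bochner_integral M Y b"
  shows "has_bochner_integral M (\<lambda>\<omega>. X \<omega> * Y \<omega>) (a * b)"
proof -
  have i: "integrable M X" "integrable M Y" and e: "expectation X = a" "expectation Y = b"
    using assms(2,3) by (auto simp: has_bochner_integral_iff)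
  show ?thesis
    using indep_var_lebesgue_integral[OF assms(1) i] indep_var_integrable[OF assms(1) i] e
    by (simp add: has_bochner_integral_iff)
qed

lemma rk_step_hb:
  fixes \<eta> h x0 :: real
  assumes h: "0 < h"
    and DU: "\<forall>n. distributed M lborel (dW n) (normal_density 0 (sqrt h))"
    and DW: "\<forall>n. distributed M lborel (dWt n) (normal_density 0 (sqrt h))"
    and ind: "indep_vars (\<lambda>_. borel) (\<lambda>k. case k of Inl n \<Rightarrow> dW n | Inr n \<Rightarrow> dWt n) UNIV"
    and i1: "integrable M (\<lambda>\<omega>. rk_iter \<eta> h x0 (\<lambda>k. dW k \<omega>) (\<lambda>k. dWt k \<omega>) n)"
    and i2: "integrable M (\<lambda>\<omega>. (rk_iter \<eta> h x0 (\<lambda>k. dW k \<omega>) (\<lambda>k. dWt k \<omega>) n)^2)"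
  shows "has_bochner_integral M (\<lambda>\<omega>. rk_iter \<eta> h x0 (\<lambda>k. dW k \<omega>) (\<lambda>k. dWt k \<omega>) (Suc n))
           (rA1 \<eta> h * expectation (\<lambda>\<omega>. rk_iter \<eta> h x0 (\<lambda>k. dW k \<omega>) (\<lambda>k. dWt k \<omega>) n) + rB1 \<eta> h)"
    "has_bochner_integral M (\<lambda>\<omega>. (rk_iter \<eta> h x0 (\<lambda>k. dW k \<omega>) (\<lambda>k. dWt k \<omega>) (Suc n))^2)
           (rA2 \<eta> h * expectation (\<lambda>\<omega>. (rk_iter \<eta> h x0 (\<lambda>k. dW k \<omega>) (\<lambda>k. dWt k \<omega>) n)^2)
            + rC \<eta> h * expectation (\<lambda>\<omega>. rk_iter \<eta> h x0 (\<lambda>k. dW k \<omega>) (\<lambda>k. dWt k \<omega>) n) + rD \<eta> h)"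
proof -
  define x where "x = (\<lambda>n \<omega>. rk_iter \<eta> h x0 (\<lambda>k. dW k \<omega>) (\<lambda>k. dWt k \<omega>) n)"
  define pa where "pa = (\<lambda>u. ra0 \<eta> h + ra1 \<eta> h * u + ra2 \<eta> h * u^2 + ra3 \<eta> h * u^3)"
  define pb where "pb = (\<lambda>u. rb0 \<eta> h + rb1 \<eta> h * u + rb2 \<eta> h * u^2 + rb3 \<eta> h * u^3)"
  define c where "c = h / (2 * sqrt 3)"
  have DUn: "distributed M lborel (dW n) (normal_density 0 (sqrt h))" using DU by blast
  have DWn: "distributed M lborel (dWt n) (normal_density 0 (sqrt h))" using DW by blast
  have indUW: "indep_var borel (\<lambda>\<omega>. f (dW n \<omega>)) borel (\<lambda>\<omega>. g (dWt n \<omega>))"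
    if "f \<in> borel_measurable borel" "g \<in> borel_measurable borel" for f g :: "real \<Rightarrow> real"
    by (rule indep_uw[OF ind that])
  note UW = uw_facts[of h dW n dWt \<eta>, OF h DUn DWn ind]
  have F1: "has_bochner_integral M (\<lambda>\<omega>. pa (dW n \<omega>)) (rA1 \<eta> h)"
    using UW(1) by (simp add: pa_def)
  have F2: "has_bochner_integral M (\<lambda>\<omega>. pb (dW n \<omega>) - c * dWt n \<omega>) (rB1 \<eta> h)"
    using UW(2) by (simp add: pb_def c_def)
  have F3: "has_bochner_integral M (\<lambda>\<omega>. (pa (dW n \<omega>))^2) (rA2 \<eta> h)"
    using UW(3) by (simp add: pa_def)
  have F4: "has_bochner_integral M (\<lambda>\<omega>. 2 * pa (dW n \<omega>) * (pb (dW n \<omega>) - c * dWt n \<omega>)) (rC \<eta> h)"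
    using UW(4) by (simp add: pa_def pb_def c_def)
  have F5: "has_bochner_integral M (\<lambda>\<omega>. (pb (dW n \<omega>) - c * dWt n \<omega>)^2) (rD \<eta> h)"
    using UW(5) by (simp add: pb_def c_def)
  have X1: "has_bochner_integral M (x n) (expectation (x n))"
    using i1 by (simp add: x_def has_bochner_integral_iff)
  have X2: "has_bochner_integral M (\<lambda>\<omega>. (x n \<omega>)^2) (expectation (\<lambda>\<omega>. (x n \<omega>)^2))"
    using i2 by (simp add: x_def has_bochner_integral_iff)
  have iv1: "indep_var borel (\<lambda>\<omega>. x n \<omega>) borel (\<lambda>\<omega>. pa (dW n \<omega>))"
    using indep_xn[OF ind, of "\<lambda>t. t" "\<lambda>a b. pa a" \<eta> h x0 n] unfolding x_def pa_def by measurable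
  have iv2: "indep_var borel (\<lambda>\<omega>. (x n \<omega>)^2) borel (\<lambda>\<omega>. (pa (dW n \<omega>))^2)"
    using indep_xn[OF ind, of "\<lambda>t. t^2" "\<lambda>a b. (pa a)^2" \<eta> h x0 n] unfolding x_def pa_def by measurable
  have iv3: "indep_var borel (\<lambda>\<omega>. x n \<omega>) borel (\<lambda>\<omega>. 2 * pa (dW n \<omega>) * (pb (dW n \<omega>) - c * dWt n \<omega>))"
    using indep_xn[OF ind, of "\<lambda>t. t" "\<lambda>a b. 2 * pa a * (pb a - c * b)" \<eta> h x0 n]
    unfolding x_def pa_def pb_def by measurable
  have step: "x (Suc n) \<omega> = x n \<omega> * pa (dW n \<omega>) + (pb (dW n \<omega>) - c * dWt n \<omega>)" for \<omega>
    by (simp add: x_def pa_def pb_def c_def rk_step_eq algebra_simps)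
  show "has_bochner_integral M (\<lambda>\<omega>. rk_iter \<eta> h x0 (\<lambda>k. dW k \<omega>) (\<lambda>k. dWt k \<omega>) (Suc n))
           (rA1 \<eta> h * expectation (\<lambda>\<omega>. rk_iter \<eta> h x0 (\<lambda>k. dW k \<omega>) (\<lambda>k. dWt k \<omega>) n) + rB1 \<eta> h)"
    by (rule hb_conv[OF has_bochner_integral_add[OF hb_indep_mult[OF iv1 X1 F1] F2]])
       (simp_all add: x_def pa_def pb_def c_def rk_step_eq algebra_simps)
  show "has_bochner_integral M (\<lambda>\<omega>. (rk_iter \<eta> h x0 (\<lambda>k. dW k \<omega>) (\<lambda>k. dWt k \<omega>) (Suc n))^2)
           (rA2 \<eta> h * expectation (\<lambda>\<omega>. (rk_iter \<eta> h x0 (\<lambda>k. dW k \<omega>) (\<lambda>k. dWt k \<omega>) n)^2)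
            + rC \<eta> h * expectation (\<lambda>\<omega>. rk_iter \<eta> h x0 (\<lambda>k. dW k \<omega>) (\<lambda>k. dWt k \<omega>) n) + rD \<eta> h)"
  proof (rule hb_conv[OF has_bochner_integral_add[OF has_bochner_integral_add[OF
          hb_indep_mult[OF iv2 X2 F3] hb_indep_mult[OF iv3 X1 F4]] F5]])
    fix \<omega>
    show "(x n \<omega>)\<^sup>2 * (pa (dW n \<omega>))\<^sup>2 + x n \<omega> * (2 * pa (dW n \<omega>) * (pb (dW n \<omega>) - c * dWt n \<omega>)) +
          (pb (dW n \<omega>) - c * dWt n \<omega>)\<^sup>2 = (rk_iter \<eta> h x0 (\<lambda>k. dW k \<omega>) (\<lambda>k. dWt k \<omega>) (Suc n))\<^sup>2"
    proof -
      have st: "rk_iter \<eta> h x0 (\<lambda>k. dW k \<omega>) (\<lambda>k. dWt k \<omega>) (Suc n) = x n \<omega> * pa (dW n \<omega>) + (pb (dW n \<omega>) - c * dWt n \<omega>)"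
        using step[of \<omega>] by (simp only: x_def)
      show ?thesis by (simp only: st) (simp add: power2_eq_square algebra_simps)
    qed
  qed (simp add: x_def mult.commute)
qed

lemma rk_moments:
  fixes \<eta> h x0 :: real
  assumes h: "0 < h"
    and DU: "\<forall>n. distributed M lborel (dW n) (normal_density 0 (sqrt h))"
    and DW: "\<forall>n. distributed M lborel (dWt n) (normal_density 0 (sqrt h))"
    and ind: "indep_vars (\<lambda>_. borel) (\<lambda>k. case k of Inl n \<Rightarrow> dW n | Inr n \<Rightarrow> dWt n) UNIV"
  shows "integrable M (\<lambda>\<omega>. rk_iter \<eta> h x0 (\<lambda>k. dW k \<omega>) (\<lambda>k. dWt k \<omega>) n) \<and>
         integrable M (\<lambda>\<omega>. (rk_iter \<eta> h x0 (\<lambda>k. dW k \<omega>) (\<lambda>k. dWt k \<omega>) n)^2)"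
proof (induction n)
  case 0 then show ?case by simp
next
  case (Suc n)
  then show ?case using rk_step_hb[OF h DU DW ind, of \<eta> x0 n] by (auto simp: has_bochner_integral_iff)
qed

lemma rk_limit:
  fixes \<eta> h x0 :: real
  assumes h: "0 < h"
    and DU: "\<forall>n. distributed M lborel (dW n) (normal_density 0 (sqrt h))"
    and DW: "\<forall>n. distributed M lborel (dWt n) (normal_density 0 (sqrt h))"
    and ind: "indep_vars (\<lambda>_. borel) (\<lambda>k. case k of Inl n \<Rightarrow> dW n | Inr n \<Rightarrow> dWt n) UNIV"
    and A1: "\<bar>rA1 \<eta> h\<bar> < 1" and A2: "\<bar>rA2 \<eta> h\<bar> < 1"
  shows "(\<lambda>n. expectation (\<lambda>\<omega>. (rk_iter \<eta> h x0 (\<lambda>k. dW k \<omega>) (\<lambda>k. dWt k \<omega>) n)^2)) \<longlonglongrightarrow> rR \<eta> h"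
proof -
  define m where "m = (\<lambda>n. expectation (\<lambda>\<omega>. rk_iter \<eta> h x0 (\<lambda>k. dW k \<omega>) (\<lambda>k. dWt k \<omega>) n))"
  define s where "s = (\<lambda>n. expectation (\<lambda>\<omega>. (rk_iter \<eta> h x0 (\<lambda>k. dW k \<omega>) (\<lambda>k. dWt k \<omega>) n)^2))"
  have rec: "m (Suc n) = rA1 \<eta> h * m n + rB1 \<eta> h"
     "s (Suc n) = rA2 \<eta> h * s n + (rC \<eta> h * m n + rD \<eta> h)" for n
    using rk_step_hb[OF h DU DW ind, of \<eta> x0 n] rk_moments[OF h DU DW ind, of \<eta> x0 n]
    by (auto simp: m_def s_def has_bochner_integral_iff)
  have mlim: "m \<longlonglongrightarrow> rB1 \<eta> h / (1 - rA1 \<eta> h)"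
    by (rule lin_rec_tendsto[OF A1, where f="\<lambda>_. rB1 \<eta> h"]) (simp_all add: rec)
  have flim: "(\<lambda>n. rC \<eta> h * m n + rD \<eta> h) \<longlonglongrightarrow> rC \<eta> h * (rB1 \<eta> h / (1 - rA1 \<eta> h)) + rD \<eta> h"
    by (intro tendsto_intros mlim)
  have slim: "s \<longlonglongrightarrow> (rC \<eta> h * (rB1 \<eta> h / (1 - rA1 \<eta> h)) + rD \<eta> h) / (1 - rA2 \<eta> h)"
    by (rule lin_rec_tendsto[OF A2 flim]) (simp add: rec)
  have p1: "rP1 \<eta> h \<noteq> 0" using A1 P1_eq[of \<eta> h] h by auto
  have p2: "rP2 \<eta> h \<noteq> 0" using A2 P2_eq[of \<eta> h] h by auto
  have "(rC \<eta> h * (rB1 \<eta> h / (1 - rA1 \<eta> h)) + rD \<eta> h) / (1 - rA2 \<eta> h) = rR \<eta> h"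
  proof -
    have "(rC \<eta> h * (rB1 \<eta> h / (1 - rA1 \<eta> h)) + rD \<eta> h) / (1 - rA2 \<eta> h)
        = (h * rQ2 \<eta> h * (h * (rbe \<eta> h + rb2 \<eta> h) / (h * rP1 \<eta> h)) + h * rQ3 \<eta> h) / (h * rP2 \<eta> h)"
      by (simp only: P1_eq P2_eq Q2_eq Q3_eq B1_eq)
    also have "\<dots> = (rQ2 \<eta> h * (rbe \<eta> h + rb2 \<eta> h) / rP1 \<eta> h + rQ3 \<eta> h) / rP2 \<eta> h"
      using h p1 p2 by (simp add: field_simps)
    finally show ?thesis by (simp add: rR_def)
  qed
  with slim show ?thesis by (simp add: s_def)
qed

end
theorem mainTheorem9:
  fixes \<eta> x0 :: real
  assumes "\<eta>^2 < 2"
  shows "\<exists>mu_inf :: real \<Rightarrow> real.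
    (\<forall>h>0.
       \<bar>1 - h + 1/8 * h^2 * (4 - \<eta>^4) - 1/48 * h^3 * (2 + \<eta>^2)^3\<bar> < 1 \<longrightarrow>
       \<bar>1 - h * (2 - \<eta>^2) + 1/4 * h^2 * (8 - 8 * \<eta>^2 + \<eta>^4)
          - 1/24 * h^3 * (32 - 36 * \<eta>^2 + 3 * \<eta>^6)
          + 1/192 * h^4 * (2 + \<eta>^2)^2 * (28 - 52 * \<eta>^2 + 27 * \<eta>^4)
          - 1/96 * h^5 * (2 + \<eta>^2)^4 * (1 - 2 * \<eta>^2)
          + 1/2304 * h^6 * (2 + \<eta>^2)^6\<bar> < 1 \<longrightarrow>
       (\<forall>(M :: 'a measure) (dW :: nat \<Rightarrow> 'a \<Rightarrow> real) (dWt :: nat \<Rightarrow> 'a \<Rightarrow> real).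
          prob_space M \<longrightarrow>
          (\<forall>n. distributed M lborel (dW n) (normal_density 0 (sqrt h))) \<longrightarrow>
          (\<forall>n. distributed M lborel (dWt n) (normal_density 0 (sqrt h))) \<longrightarrow>
          prob_space.indep_vars M (\<lambda>_. borel)
            (\<lambda>k. case k of Inl n \<Rightarrow> dW n | Inr n \<Rightarrow> dWt n) UNIV \<longrightarrow>
          (\<lambda>n. integral\<^sup>L M (\<lambda>\<omega>. (rk_iter \<eta> h x0 (\<lambda>k. dW k \<omega>) (\<lambda>k. dWt k \<omega>) n)^2))
            \<longlonglongrightarrow> mu_inf h))
    \<and> (\<lambda>h. mu_inf h - 1 / (2 - \<eta>^2)) \<in> O[at_right 0](\<lambda>h. h)"
proof (intro exI[of _ "rR \<eta>"] conjI allI impI)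
  fix h :: real and M :: "'a measure" and dW dWt :: "nat \<Rightarrow> 'a \<Rightarrow> real"
  assume h: "h > 0"
    and c1: "\<bar>1 - h + 1/8 * h^2 * (4 - \<eta>^4) - 1/48 * h^3 * (2 + \<eta>^2)^3\<bar> < 1"
    and c2: "\<bar>1 - h * (2 - \<eta>^2) + 1/4 * h^2 * (8 - 8 * \<eta>^2 + \<eta>^4)
          - 1/24 * h^3 * (32 - 36 * \<eta>^2 + 3 * \<eta>^6)
          + 1/192 * h^4 * (2 + \<eta>^2)^2 * (28 - 52 * \<eta>^2 + 27 * \<eta>^4)
          - 1/96 * h^5 * (2 + \<eta>^2)^4 * (1 - 2 * \<eta>^2)
          + 1/2304 * h^6 * (2 + \<eta>^2)^6\<bar> < 1"
    and pM: "prob_space M"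
    and DU: "\<forall>n. distributed M lborel (dW n) (normal_density 0 (sqrt h))"
    and DW: "\<forall>n. distributed M lborel (dWt n) (normal_density 0 (sqrt h))"
    and ind: "prob_space.indep_vars M (\<lambda>_. borel) (\<lambda>k. case k of Inl n \<Rightarrow> dW n | Inr n \<Rightarrow> dWt n) UNIV"
  have a1: "\<bar>rA1 \<eta> h\<bar> < 1" using c1 by (simp only: A1_eq)
  have a2: "\<bar>rA2 \<eta> h\<bar> < 1" using c2 by (simp only: A2_eq)
  show "(\<lambda>n. integral\<^sup>L M (\<lambda>\<omega>. (rk_iter \<eta> h x0 (\<lambda>k. dW k \<omega>) (\<lambda>k. dWt k \<omega>) n)^2)) \<longlonglongrightarrow> rR \<eta> h"
    by (rule prob_space.rk_limit[OF pM h DU DW ind a1 a2])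
next
  show "(\<lambda>h. rR \<eta> h - 1 / (2 - \<eta>^2)) \<in> O[at_right 0](\<lambda>h. h)"
    by (rule R_bigo[OF assms])
qed

end
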